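(* Let $\mathfrak{G}$ be a Lie algebra over $\mathbb{K}$ and $I\subseteq\mathfrak{G}$ an ideal. Let $U$ and $U'$ be $\mathfrak{G}/I$-modules (regarded as $\mathfrak{G}$-modules), and let $W$ be a $\mathfrak{G}$-module on which $I$ acts densely and irreducibly with $\mathrm{End}_I(W)=\mathbb{K}$. Then every $\mathfrak{G}$-module homomorphism $U\otimes W\to U'\otimes W$ is of the form $g\otimes\mathrm{id}_W$ for a unique $g\in\mathrm{Hom}_{\mathfrak{G}}(U,U')$; that is, $\mathrm{Hom}_{\mathfrak{G}}(U\otimes W,U'\otimes W)=\mathrm{Hom}_{\mathfrak{G}}(U,U')$.
   Context: A Lie subalgebra $I$ of a Lie algebra $\mathfrak{G}$ acts densely on a $\mathfrak{G}$-module $W$ if for every finite set $\{w_1,\dots,w_n\}\subset W$ and every $h\in\mathfrak{G}$ there is $h'\in I$ with $h'w_i=hw_i$ for all $i$. $\mathbb{K}$ is a field of characteristic $0$. *)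

theory Defs
  imports Complex_Main "HOL-Library.Function_Algebras"
begin

definition lie_algebra :: "('k::field \<Rightarrow> 'g::ab_group_add \<Rightarrow> 'g) \<Rightarrow> ('g \<Rightarrow> 'g \<Rightarrow> 'g) \<Rightarrow> bool" where
  "lie_algebra sg br \<longleftrightarrow> vector_space sg
     \<and> (\<forall>x y z. br (x + y) z = br x z + br y z)
     \<and> (\<forall>c x y. br (sg c x) y = sg c (br x y))
     \<and> (\<forall>x y z. br x (y + z) = br x y + br x z)
     \<and> (\<forall>c x y. br x (sg c y) = sg c (br x y))
     \<and> (\<forall>x. br x x = 0)
     \<and> (\<forall>x y z. br x (br y z) + br y (br z x) + br z (br x y) = 0)"

definition lie_ideal :: "('k::field \<Rightarrow> 'g::ab_group_add \<Rightarrow> 'g) \<Rightarrow> ('g \<Rightarrow> 'g \<Rightarrow> 'g) \<Rightarrow> 'g set \<Rightarrow> bool" where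
  "lie_ideal sg br I \<longleftrightarrow> module.subspace sg I \<and> (\<forall>x. \<forall>i\<in>I. br x i \<in> I)"

definition lie_module :: "('k::field \<Rightarrow> 'g::ab_group_add \<Rightarrow> 'g) \<Rightarrow> ('g \<Rightarrow> 'g \<Rightarrow> 'g)
    \<Rightarrow> ('k \<Rightarrow> 'v::ab_group_add \<Rightarrow> 'v) \<Rightarrow> ('g \<Rightarrow> 'v \<Rightarrow> 'v) \<Rightarrow> bool" where
  "lie_module sg br sV act \<longleftrightarrow> vector_space sV
     \<and> (\<forall>x. Vector_Spaces.linear sV sV (act x))
     \<and> (\<forall>x y v. act (x + y) v = act x v + act y v)
     \<and> (\<forall>c x v. act (sg c x) v = sV c (act x v))
     \<and> (\<forall>x y v. act (br x y) v = act x (act y v) - act y (act x v))"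

definition lie_module_hom :: "('k::field \<Rightarrow> 'v::ab_group_add \<Rightarrow> 'v) \<Rightarrow> ('g \<Rightarrow> 'v \<Rightarrow> 'v)
    \<Rightarrow> ('k \<Rightarrow> 'v2::ab_group_add \<Rightarrow> 'v2) \<Rightarrow> ('g \<Rightarrow> 'v2 \<Rightarrow> 'v2) \<Rightarrow> ('v \<Rightarrow> 'v2) \<Rightarrow> bool" where
  "lie_module_hom sV act sV2 act2 g \<longleftrightarrow> Vector_Spaces.linear sV sV2 g
     \<and> (\<forall>x v. g (act x v) = act2 x (g v))"

definition acts_densely :: "'g set \<Rightarrow> ('g \<Rightarrow> 'w \<Rightarrow> 'w) \<Rightarrow> bool" where
  "acts_densely I act \<longleftrightarrow>
     (\<forall>F h. finite F \<longrightarrow> (\<exists>h'\<in>I. \<forall>w\<in>F. act h' w = act h w))"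

definition irreducible_under :: "('k::field \<Rightarrow> 'w::ab_group_add \<Rightarrow> 'w) \<Rightarrow> 'g set \<Rightarrow> ('g \<Rightarrow> 'w \<Rightarrow> 'w) \<Rightarrow> bool" where
  "irreducible_under sW I act \<longleftrightarrow> (\<exists>w::'w. w \<noteq> 0)
     \<and> (\<forall>S. module.subspace sW S \<and> (\<forall>i\<in>I. \<forall>w\<in>S. act i w \<in> S) \<longrightarrow> S = {0} \<or> S = UNIV)"

definition endo_scalar :: "('k::field \<Rightarrow> 'w::ab_group_add \<Rightarrow> 'w) \<Rightarrow> 'g set \<Rightarrow> ('g \<Rightarrow> 'w \<Rightarrow> 'w) \<Rightarrow> bool" where
  "endo_scalar sW I act \<longleftrightarrow>
     (\<forall>f. Vector_Spaces.linear sW sW f \<and> (\<forall>i\<in>I. \<forall>w. f (act i w) = act i (f w))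
          \<longrightarrow> (\<exists>c. \<forall>w. f w = sW c w))"

section \<open>Tensor product U \<otimes> W as quotient of the free vector space on U \<times> W\<close>

definition fscale :: "'k::field \<Rightarrow> ('a \<Rightarrow> 'k) \<Rightarrow> ('a \<Rightarrow> 'k)" where
  "fscale c f = (\<lambda>p. c * f p)"

definition delta :: "'a \<Rightarrow> 'a \<Rightarrow> 'k::field" where
  "delta p = (\<lambda>q. if q = p then 1 else 0)"

definition free_space :: "('a \<Rightarrow> 'k::field) set" where
  "free_space = {f. finite {p. f p \<noteq> 0}}"

definition tensor_rels :: "('k::field \<Rightarrow> 'u::ab_group_add \<Rightarrow> 'u) \<Rightarrow> ('k \<Rightarrow> 'w::ab_group_add \<Rightarrow> 'w)
    \<Rightarrow> ('u \<times> 'w \<Rightarrow> 'k) set" where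
  "tensor_rels sU sW =
     {delta (u1 + u2, w) - delta (u1, w) - delta (u2, w) | u1 u2 w. True}
   \<union> {delta (u, w1 + w2) - delta (u, w1) - delta (u, w2) | u w1 w2. True}
   \<union> {delta (sU c u, w) - fscale c (delta (u, w)) | c u w. True}
   \<union> {delta (u, sW c w) - fscale c (delta (u, w)) | c u w. True}"

definition tensor_null :: "('k::field \<Rightarrow> 'u::ab_group_add \<Rightarrow> 'u) \<Rightarrow> ('k \<Rightarrow> 'w::ab_group_add \<Rightarrow> 'w)
    \<Rightarrow> ('u \<times> 'w \<Rightarrow> 'k) set" where
  "tensor_null sU sW = module.span fscale (tensor_rels sU sW)"

definition tensor_cls :: "('k::field \<Rightarrow> 'u::ab_group_add \<Rightarrow> 'u) \<Rightarrow> ('k \<Rightarrow> 'w::ab_group_add \<Rightarrow> 'w)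
    \<Rightarrow> ('u \<times> 'w \<Rightarrow> 'k) \<Rightarrow> ('u \<times> 'w \<Rightarrow> 'k) set" where
  "tensor_cls sU sW f = {g \<in> free_space. g - f \<in> tensor_null sU sW}"

definition tensor_space :: "('k::field \<Rightarrow> 'u::ab_group_add \<Rightarrow> 'u) \<Rightarrow> ('k \<Rightarrow> 'w::ab_group_add \<Rightarrow> 'w)
    \<Rightarrow> ('u \<times> 'w \<Rightarrow> 'k) set set" where
  "tensor_space sU sW = tensor_cls sU sW ` free_space"

definition tensor_rep :: "'a set \<Rightarrow> 'a" where
  "tensor_rep X = (SOME f. f \<in> X)"

definition lin_ext :: "('a \<Rightarrow> 'b \<Rightarrow> 'k::field) \<Rightarrow> ('a \<Rightarrow> 'k) \<Rightarrow> ('b \<Rightarrow> 'k)" where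
  "lin_ext F f = (\<lambda>p. \<Sum>q\<in>{q. f q \<noteq> 0}. f q * F q p)"

definition tensor_add :: "('k::field \<Rightarrow> 'u::ab_group_add \<Rightarrow> 'u) \<Rightarrow> ('k \<Rightarrow> 'w::ab_group_add \<Rightarrow> 'w)
    \<Rightarrow> ('u \<times> 'w \<Rightarrow> 'k) set \<Rightarrow> ('u \<times> 'w \<Rightarrow> 'k) set \<Rightarrow> ('u \<times> 'w \<Rightarrow> 'k) set" where
  "tensor_add sU sW X Y = tensor_cls sU sW (tensor_rep X + tensor_rep Y)"

definition tensor_scale :: "('k::field \<Rightarrow> 'u::ab_group_add \<Rightarrow> 'u) \<Rightarrow> ('k \<Rightarrow> 'w::ab_group_add \<Rightarrow> 'w)
    \<Rightarrow> 'k \<Rightarrow> ('u \<times> 'w \<Rightarrow> 'k) set \<Rightarrow> ('u \<times> 'w \<Rightarrow> 'k) set" where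
  "tensor_scale sU sW c X = tensor_cls sU sW (fscale c (tensor_rep X))"

definition tensor_act :: "('k::field \<Rightarrow> 'u::ab_group_add \<Rightarrow> 'u) \<Rightarrow> ('k \<Rightarrow> 'w::ab_group_add \<Rightarrow> 'w)
    \<Rightarrow> ('g \<Rightarrow> 'u \<Rightarrow> 'u) \<Rightarrow> ('g \<Rightarrow> 'w \<Rightarrow> 'w) \<Rightarrow> 'g \<Rightarrow> ('u \<times> 'w \<Rightarrow> 'k) set \<Rightarrow> ('u \<times> 'w \<Rightarrow> 'k) set" where
  "tensor_act sU sW aU aW h X =
     tensor_cls sU sW (lin_ext (\<lambda>(u, w). delta (aU h u, w) + delta (u, aW h w)) (tensor_rep X))"

definition tensor_map_left :: "('k::field \<Rightarrow> 'u2::ab_group_add \<Rightarrow> 'u2) \<Rightarrow> ('k \<Rightarrow> 'w::ab_group_add \<Rightarrow> 'w)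
    \<Rightarrow> ('u \<Rightarrow> 'u2) \<Rightarrow> ('u \<times> 'w \<Rightarrow> 'k) set \<Rightarrow> ('u2 \<times> 'w \<Rightarrow> 'k) set" where
  "tensor_map_left sU2 sW g X =
     tensor_cls sU2 sW (lin_ext (\<lambda>(u, w). delta (g u, w)) (tensor_rep X))"

definition tensor_module_hom :: "('k::field \<Rightarrow> 'u::ab_group_add \<Rightarrow> 'u) \<Rightarrow> ('g \<Rightarrow> 'u \<Rightarrow> 'u)
    \<Rightarrow> ('k \<Rightarrow> 'u2::ab_group_add \<Rightarrow> 'u2) \<Rightarrow> ('g \<Rightarrow> 'u2 \<Rightarrow> 'u2)
    \<Rightarrow> ('k \<Rightarrow> 'w::ab_group_add \<Rightarrow> 'w) \<Rightarrow> ('g \<Rightarrow> 'w \<Rightarrow> 'w)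
    \<Rightarrow> (('u \<times> 'w \<Rightarrow> 'k) set \<Rightarrow> ('u2 \<times> 'w \<Rightarrow> 'k) set) \<Rightarrow> bool" where
  "tensor_module_hom sU aU sU2 aU2 sW aW \<phi> \<longleftrightarrow>
     (\<forall>X\<in>tensor_space sU sW. \<phi> X \<in> tensor_space sU2 sW)
   \<and> (\<forall>X\<in>tensor_space sU sW. \<forall>Y\<in>tensor_space sU sW.
        \<phi> (tensor_add sU sW X Y) = tensor_add sU2 sW (\<phi> X) (\<phi> Y))
   \<and> (\<forall>c. \<forall>X\<in>tensor_space sU sW. \<phi> (tensor_scale sU sW c X) = tensor_scale sU2 sW c (\<phi> X))
   \<and> (\<forall>h. \<forall>X\<in>tensor_space sU sW.
        \<phi> (tensor_act sU sW aU aW h X) = tensor_act sU2 sW aU2 aW h (\<phi> X))"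

end

theory Submission imports Defs begin

lemma sum_fun_apply': "(sum h S) p = (\<Sum>q\<in>S. h q p)"
  by (induction S rule: infinite_finite_induct) auto

lemma module_fscale: "module (fscale :: 'k::field \<Rightarrow> ('a \<Rightarrow> 'k) \<Rightarrow> _)"
  by unfold_locales (auto simp: fscale_def fun_eq_iff algebra_simps)

lemma vs_fscale: "vector_space (fscale :: 'k::field \<Rightarrow> ('a \<Rightarrow> 'k) \<Rightarrow> _)"
  using module_fscale by (simp add: module_iff_vector_space)

interpretation FS: vector_space "fscale :: 'k::field \<Rightarrow> ('a \<Rightarrow> 'k) \<Rightarrow> _"
  by (rule vs_fscale)

lemma fscale_apply: "fscale c f p = c * f p" by (simp add: fscale_def)

lemma free_add: "f + g \<in> free_space" if "f \<in> free_space" "g \<in> free_space"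
proof -
  have "{p. (f + g) p \<noteq> 0} \<subseteq> {p. f p \<noteq> 0} \<union> {p. g p \<noteq> 0}" by auto
  then show ?thesis using that unfolding free_space_def by (auto intro: finite_subset)
qed

lemma free_subspace: "module.subspace fscale (free_space :: ('a \<Rightarrow> 'k::field) set)"
  unfolding module.subspace_def[OF module_fscale]
proof (intro conjI ballI allI)
  show "0 \<in> (free_space :: ('a \<Rightarrow> 'k::field) set)" by (simp add: free_space_def)
  show "x + y \<in> free_space" if "x \<in> free_space" "y \<in> free_space" for x y :: "'a \<Rightarrow> 'k"
    using free_add that by blast
  show "fscale c x \<in> free_space" if "x \<in> free_space" for c and x :: "'a \<Rightarrow> 'k"
    using that unfolding free_space_def by (auto elim!: finite_subset[rotated] simp: fscale_apply)
qed

lemma free_zero[simp]: "0 \<in> free_space" by (simp add: free_space_def)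
lemma free_scale: "f \<in> free_space \<Longrightarrow> fscale c f \<in> free_space"
  by (rule FS.subspace_scale[OF free_subspace])
lemma free_diff: "f \<in> free_space \<Longrightarrow> g \<in> free_space \<Longrightarrow> f - g \<in> free_space"
  by (rule FS.subspace_diff[OF free_subspace])
lemma free_neg: "f \<in> free_space \<Longrightarrow> - f \<in> free_space"
  by (rule FS.subspace_neg[OF free_subspace])
lemma free_sum: "(\<And>i. i \<in> S \<Longrightarrow> h i \<in> free_space) \<Longrightarrow> sum h S \<in> free_space"
  by (rule FS.subspace_sum[OF free_subspace])
lemma delta_apply: "delta p q = (if q = p then 1 else 0)" by (simp add: delta_def)
lemma supp_delta: "{q. (delta p q :: 'k::field) \<noteq> 0} = {p}" by (auto simp: delta_def)
lemma free_delta[simp]: "delta p \<in> free_space"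
  by (simp add: free_space_def supp_delta)
lemma finite_supp: "f \<in> free_space \<Longrightarrow> finite {q. f q \<noteq> 0}" by (simp add: free_space_def)

definition Ext :: "('k::field \<Rightarrow> 'v::ab_group_add \<Rightarrow> 'v) \<Rightarrow> ('a \<Rightarrow> 'v) \<Rightarrow> ('a \<Rightarrow> 'k) \<Rightarrow> 'v" where
  "Ext s G f = (\<Sum>q\<in>{q. f q \<noteq> 0}. s (f q) (G q))"

lemma lin_ext_Ext: "lin_ext G f = Ext fscale G f"
  by (simp add: lin_ext_def Ext_def fun_eq_iff sum_fun_apply' fscale_apply)

context
  fixes s :: "'k::field \<Rightarrow> 'v::ab_group_add \<Rightarrow> 'v"
  assumes vs: "vector_space s"
begin
interpretation V: vector_space s by (rule vs)

lemma Ext_superset: "finite S \<Longrightarrow> {q. f q \<noteq> 0} \<subseteq> S \<Longrightarrow> Ext s G f = (\<Sum>q\<in>S. s (f q) (G q))"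
  unfolding Ext_def by (rule sum.mono_neutral_left) auto

lemma Ext_add: assumes "f \<in> free_space" "g \<in> free_space"
  shows "Ext s G (f + g) = Ext s G f + Ext s G g"
proof -
  let ?S = "{q. f q \<noteq> 0} \<union> {q. g q \<noteq> 0}"
  have fin: "finite ?S" using assms by (simp add: free_space_def)
  have "Ext s G (f + g) = (\<Sum>q\<in>?S. s ((f + g) q) (G q))" by (rule Ext_superset[OF fin]) auto
  also have "\<dots> = (\<Sum>q\<in>?S. s (f q) (G q)) + (\<Sum>q\<in>?S. s (g q) (G q))"
    by (simp add: V.scale_left_distrib sum.distrib)
  also have "\<dots> = Ext s G f + Ext s G g"
    using Ext_superset[OF fin, of f G] Ext_superset[OF fin, of g G] by auto
  finally show ?thesis .
qed

lemma Ext_scale: assumes "f \<in> free_space"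
  shows "Ext s G (fscale c f) = s c (Ext s G f)"
proof -
  let ?S = "{q. f q \<noteq> 0}"
  have fin: "finite ?S" using assms by (simp add: free_space_def)
  have "Ext s G (fscale c f) = (\<Sum>q\<in>?S. s (c * f q) (G q))" by (subst Ext_superset[OF fin]) (auto simp: fscale_apply)
  also have "\<dots> = s c (Ext s G f)" by (simp add: Ext_def V.scale_sum_right)
  finally show ?thesis .
qed

lemma Ext_delta[simp]: "Ext s G (delta p) = G p"
  by (simp add: Ext_def supp_delta delta_def)

lemma Ext_zero[simp]: "Ext s G 0 = 0" by (simp add: Ext_def)

lemma Ext_neg: "f \<in> free_space \<Longrightarrow> Ext s G (- f) = - Ext s G f"
proof -
  assume "f \<in> free_space"
  moreover have "fscale (-1) f = - f" by (simp add: fun_eq_iff)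
  ultimately show ?thesis using Ext_scale[of f G "-1"] by simp
qed

lemma Ext_diff: "f \<in> free_space \<Longrightarrow> g \<in> free_space \<Longrightarrow> Ext s G (f - g) = Ext s G f - Ext s G g"
  using Ext_add[of f "- g" G] Ext_neg[of g G] free_neg[of g] by simp

lemma Ext_sum: "(\<And>i. i \<in> S \<Longrightarrow> h i \<in> free_space) \<Longrightarrow> Ext s G (sum h S) = (\<Sum>i\<in>S. Ext s G (h i))"
proof (induction S rule: infinite_finite_induct)
  case (insert x F)
  have "Ext s G (sum h (insert x F)) = Ext s G (h x + sum h F)" using insert by simp
  also have "\<dots> = Ext s G (h x) + Ext s G (sum h F)"
    by (rule Ext_add) (use insert in \<open>auto intro: free_sum\<close>)
  also have "Ext s G (sum h F) = (\<Sum>i\<in>F. Ext s G (h i))" using insert by auto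
  finally show ?case using insert(1,2) by (simp only: sum.insert[OF insert(1,2)])
qed auto

lemma Ext_span:
  assumes Z: "module.subspace s Z" and R: "R \<subseteq> free_space" and RZ: "\<And>r. r \<in> R \<Longrightarrow> Ext s G r \<in> Z"
    and x: "x \<in> module.span fscale R"
  shows "Ext s G x \<in> Z"
proof -
  have "x \<in> free_space \<and> Ext s G x \<in> Z" using x
  proof (induction rule: FS.span_induct_alt)
    case base then show ?case using V.subspace_0[OF Z] free_zero Ext_zero by metis
  next
    case (step c x y)
    have xF: "x \<in> free_space" using step R by auto
    have 1: "fscale c x \<in> free_space" using xF by (rule free_scale)
    have 2: "fscale c x + y \<in> free_space" using 1 step free_add by blast
    have 3: "Ext s G (fscale c x + y) = s c (Ext s G x) + Ext s G y"
      using Ext_add[OF 1, of y G] Ext_scale[OF xF, of G c] step by simp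
    show ?case using 2 3 RZ[OF step(1)] step(2)
      by (metis V.subspace_add[OF Z] V.subspace_scale[OF Z])
  qed
  then show ?thesis by simp
qed

lemma Ext_comp:
  assumes f: "f \<in> free_space" and H: "\<And>q. H q \<in> free_space"
  shows "Ext s G (Ext fscale H f) = Ext s (\<lambda>q. Ext s G (H q)) f"
  unfolding Ext_def[of fscale]
  by (subst Ext_sum) (auto simp: H free_scale Ext_scale Ext_def[of s "\<lambda>q. Ext s G (H q)"])


end

lemma free_decomp: "f \<in> free_space \<Longrightarrow> Ext fscale delta f = f"
  by (auto simp: Ext_def fun_eq_iff sum_fun_apply' delta_def finite_supp if_distrib fscale_apply cong: if_cong)



section \<open>Null space and classes\<close>

lemma rels_free: "tensor_rels sU sW \<subseteq> free_space"
  unfolding tensor_rels_def by (auto intro!: free_diff free_scale)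

lemma null_free: "tensor_null sU sW \<subseteq> free_space"
  unfolding tensor_null_def by (rule FS.span_minimal[OF rels_free free_subspace])

lemma null_free': "x \<in> tensor_null sU sW \<Longrightarrow> x \<in> free_space"
  using null_free by blast

lemma null_subspace: "module.subspace fscale (tensor_null sU sW)"
  unfolding tensor_null_def by (rule FS.subspace_span)

lemma null_add: "x \<in> tensor_null sU sW \<Longrightarrow> y \<in> tensor_null sU sW \<Longrightarrow> x + y \<in> tensor_null sU sW"
  unfolding tensor_null_def by (rule FS.span_add)
lemma null_diff: "x \<in> tensor_null sU sW \<Longrightarrow> y \<in> tensor_null sU sW \<Longrightarrow> x - y \<in> tensor_null sU sW"
  unfolding tensor_null_def by (rule FS.span_diff)
lemma null_neg: "x \<in> tensor_null sU sW \<Longrightarrow> - x \<in> tensor_null sU sW"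
  unfolding tensor_null_def by (rule FS.span_neg)
lemma null_scale: "x \<in> tensor_null sU sW \<Longrightarrow> fscale c x \<in> tensor_null sU sW"
  unfolding tensor_null_def by (rule FS.span_scale)
lemma null_zero: "0 \<in> tensor_null sU sW"
  unfolding tensor_null_def by (rule FS.span_zero)
lemma null_sum: "(\<And>i. i \<in> S \<Longrightarrow> h i \<in> tensor_null sU sW) \<Longrightarrow> sum h S \<in> tensor_null sU sW"
  unfolding tensor_null_def by (rule FS.span_sum)

lemma rel1: "delta (u1 + u2, w) - delta (u1, w) - delta (u2, w) \<in> tensor_null sU sW"
  unfolding tensor_null_def by (rule FS.span_base) (unfold tensor_rels_def, blast)
lemma rel2: "delta (u, w1 + w2) - delta (u, w1) - delta (u, w2) \<in> tensor_null sU sW"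
  unfolding tensor_null_def by (rule FS.span_base) (unfold tensor_rels_def, blast)
lemma rel3: "delta (sU c u, w) - fscale c (delta (u, w)) \<in> tensor_null sU sW"
  unfolding tensor_null_def by (rule FS.span_base) (unfold tensor_rels_def, blast)
lemma rel4: "delta (u, sW c w) - fscale c (delta (u, w)) \<in> tensor_null sU sW"
  unfolding tensor_null_def by (rule FS.span_base) (unfold tensor_rels_def, blast)

lemma null_cong: "a - b \<in> tensor_null sU sW \<Longrightarrow> b - c \<in> tensor_null sU sW \<Longrightarrow> a - c \<in> tensor_null sU sW"
  using null_add[of "a - b" sU sW "b - c"] by (simp add: algebra_simps)

lemma null_sym: "a - b \<in> tensor_null sU sW \<Longrightarrow> b - a \<in> tensor_null sU sW"
  using null_neg[of "a - b" sU sW] by simp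

lemma null_add_cong: "a - b \<in> tensor_null sU sW \<Longrightarrow> c - d \<in> tensor_null sU sW \<Longrightarrow> (a + c) - (b + d) \<in> tensor_null sU sW"
  using null_add[of "a - b" sU sW "c - d"] by (simp add: algebra_simps)

lemma null_sum_cong: "(\<And>i. i \<in> S \<Longrightarrow> a i - b i \<in> tensor_null sU sW) \<Longrightarrow> sum a S - sum b S \<in> tensor_null sU sW"
  using null_sum[of S "\<lambda>i. a i - b i" sU sW] by (simp add: sum_subtractf)

lemma delta_zero1: "delta (0, w) \<in> tensor_null sU sW"
  using null_neg[OF rel1[of 0 0 w sU sW]] by simp
lemma delta_zero2: "delta (u, 0) \<in> tensor_null sU sW"
  using null_neg[OF rel2[of u 0 0 sU sW]] by simp

lemma delta_sum1: "delta (sum x S, w) - (\<Sum>i\<in>S. delta (x i, w)) \<in> tensor_null sU sW"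
proof (induction S rule: infinite_finite_induct)
  case (infinite A) then show ?case using delta_zero1 by simp
next
  case empty then show ?case using delta_zero1 by simp
next
  case (insert a F)
  have h1: "delta (x a + sum x F, w) - (delta (x a, w) + delta (sum x F, w)) \<in> tensor_null sU sW"
    using rel1[of "x a" "sum x F" w sU sW] by (simp add: algebra_simps)
  have h2: "(delta (x a, w) + delta (sum x F, w)) - (delta (x a, w) + (\<Sum>i\<in>F. delta (x i, w))) \<in> tensor_null sU sW"
    using insert(3) by (simp only: add_diff_cancel_left)
  show ?case by (simp only: sum.insert[OF insert(1,2)]) (rule null_cong[OF h1 h2])
qed

lemma delta_sum2: "delta (u, sum x S) - (\<Sum>i\<in>S. delta (u, x i)) \<in> tensor_null sU sW"
proof (induction S rule: infinite_finite_induct)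
  case (infinite A) then show ?case using delta_zero2 by simp
next
  case empty then show ?case using delta_zero2 by simp
next
  case (insert a F)
  have h1: "delta (u, x a + sum x F) - (delta (u, x a) + delta (u, sum x F)) \<in> tensor_null sU sW"
    using rel2[of u "x a" "sum x F" sU sW] by (simp add: algebra_simps)
  have h2: "(delta (u, x a) + delta (u, sum x F)) - (delta (u, x a) + (\<Sum>i\<in>F. delta (u, x i))) \<in> tensor_null sU sW"
    using insert(3) by (simp only: add_diff_cancel_left)
  show ?case by (simp only: sum.insert[OF insert(1,2)]) (rule null_cong[OF h1 h2])
qed

lemma cls_self: "f \<in> free_space \<Longrightarrow> f \<in> tensor_cls sU sW f"
  by (simp add: tensor_cls_def null_zero)

lemma cls_eq: "a - b \<in> tensor_null sU sW \<Longrightarrow> tensor_cls sU sW a = tensor_cls sU sW b"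
  unfolding tensor_cls_def
proof safe
  fix g assume "a - b \<in> tensor_null sU sW" "g - a \<in> tensor_null sU sW"
  then show "g - b \<in> tensor_null sU sW" using null_cong by blast
next
  fix g assume "a - b \<in> tensor_null sU sW" "g - b \<in> tensor_null sU sW"
  then show "g - a \<in> tensor_null sU sW" using null_cong null_sym by blast
qed

lemma rep_cls: assumes "f \<in> free_space"
  shows "tensor_rep (tensor_cls sU sW f) \<in> free_space \<and> tensor_rep (tensor_cls sU sW f) - f \<in> tensor_null sU sW"
proof -
  have "tensor_rep (tensor_cls sU sW f) \<in> tensor_cls sU sW f"
    unfolding tensor_rep_def by (rule someI[of _ f]) (rule cls_self[OF assms])
  then show ?thesis by (simp add: tensor_cls_def)
qed

lemma space_cls: "X \<in> tensor_space sU sW \<Longrightarrow> \<exists>f\<in>free_space. X = tensor_cls sU sW f"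
  by (auto simp: tensor_space_def)

lemma cls_space: "f \<in> free_space \<Longrightarrow> tensor_cls sU sW f \<in> tensor_space sU sW"
  by (auto simp: tensor_space_def)

lemma cls_inj: "f \<in> free_space \<Longrightarrow> tensor_cls sU sW f = tensor_cls sU sW g \<Longrightarrow> f - g \<in> tensor_null sU sW"
  using cls_self[where f=f and sU=sU and sW=sW] by (auto simp: tensor_cls_def)

lemma add_cls: "f \<in> free_space \<Longrightarrow> g \<in> free_space \<Longrightarrow>
   tensor_add sU sW (tensor_cls sU sW f) (tensor_cls sU sW g) = tensor_cls sU sW (f + g)"
  unfolding tensor_add_def by (rule cls_eq, rule null_add_cong) (auto dest: rep_cls)

lemma scale_cls: "f \<in> free_space \<Longrightarrow>
   tensor_scale sU sW c (tensor_cls sU sW f) = tensor_cls sU sW (fscale c f)"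
proof -
  assume f: "f \<in> free_space"
  have "fscale c (tensor_rep (tensor_cls sU sW f) - f) \<in> tensor_null sU sW"
    using rep_cls[OF f, where sU=sU and sW=sW] by (intro null_scale) auto
  then show ?thesis unfolding tensor_scale_def
    by (intro cls_eq) (simp add: FS.scale_right_diff_distrib)
qed

section \<open>Bilinear generators\<close>

definition bil :: "('k::field \<Rightarrow> 'u::ab_group_add \<Rightarrow> 'u) \<Rightarrow> ('k \<Rightarrow> 'w::ab_group_add \<Rightarrow> 'w)
   \<Rightarrow> ('k \<Rightarrow> 'v::ab_group_add \<Rightarrow> 'v) \<Rightarrow> 'v set \<Rightarrow> ('u \<times> 'w \<Rightarrow> 'v) \<Rightarrow> bool" where
  "bil sU sW s Z G \<longleftrightarrow>
     (\<forall>u1 u2 w. G (u1 + u2, w) - G (u1, w) - G (u2, w) \<in> Z)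
   \<and> (\<forall>u w1 w2. G (u, w1 + w2) - G (u, w1) - G (u, w2) \<in> Z)
   \<and> (\<forall>c u w. G (sU c u, w) - s c (G (u, w)) \<in> Z)
   \<and> (\<forall>c u w. G (u, sW c w) - s c (G (u, w)) \<in> Z)"

lemma bil_null:
  assumes vs: "vector_space s" and Z: "module.subspace s Z" and b: "bil sU sW s Z G"
    and x: "x \<in> tensor_null sU sW"
  shows "Ext s G x \<in> Z"
proof -
  interpret V: vector_space s by (rule vs)
  show ?thesis
  proof (rule Ext_span[OF vs Z rels_free _ x[unfolded tensor_null_def]])
    fix r assume "r \<in> tensor_rels sU sW"
    then show "Ext s G r \<in> Z"
      using b unfolding tensor_rels_def bil_def
      by (auto simp: Ext_diff[OF vs] Ext_scale[OF vs] Ext_delta[OF vs] free_diff free_scale)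
  qed
qed

lemma bil_delta:
  assumes la: "Vector_Spaces.linear sU sU' a" and lb: "Vector_Spaces.linear sW sW' b"
  shows "bil sU sW fscale (tensor_null sU' sW') (\<lambda>(u, w). delta (a u, b w))"
proof -
  interpret A: Vector_Spaces.linear sU sU' a by (rule la)
  interpret B: Vector_Spaces.linear sW sW' b by (rule lb)
  show ?thesis unfolding bil_def
    by (simp add: A.add A.scale B.add B.scale rel1 rel2 rel3 rel4)
qed

lemma bil_plus:
  fixes Z :: "('u::ab_group_add \<times> 'w::ab_group_add \<Rightarrow> 'k::field) set"
  assumes Z: "module.subspace fscale Z" and "bil sU sW fscale Z G1" "bil sU sW fscale Z G2"
  shows "bil sU sW fscale Z (\<lambda>q. G1 q + G2 q)"
proof -
  have *: "(a + b) - (c + d) - (e + f) = (a - c - e) + (b - d - f)" for a b c d e f :: "'u \<times> 'w \<Rightarrow> 'k"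
    by (simp add: algebra_simps)
  have **: "(a + b) - fscale k (c + d) = (a - fscale k c) + (b - fscale k d)" for a b c d :: "'u \<times> 'w \<Rightarrow> 'k" and k
    by (simp add: FS.scale_right_distrib algebra_simps)
  show ?thesis using assms unfolding bil_def
    by (simp only: * **) (metis FS.subspace_add[OF Z])
qed

lemma ext_cls:
  assumes b: "bil sU sW fscale (tensor_null sU' sW') G" and f: "f \<in> free_space"
  shows "tensor_cls sU' sW' (lin_ext G (tensor_rep (tensor_cls sU sW f))) = tensor_cls sU' sW' (lin_ext G f)"
proof -
  obtain r where r: "r = tensor_rep (tensor_cls sU sW f)" by simp
  have rF: "r \<in> free_space" "r - f \<in> tensor_null sU sW" using rep_cls[OF f] r by auto
  have "Ext fscale G (r - f) \<in> tensor_null sU' sW'"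
    by (rule bil_null[OF vs_fscale null_subspace b rF(2)])
  then show ?thesis unfolding r[symmetric] lin_ext_Ext
    by (intro cls_eq) (simp add: Ext_diff[OF vs_fscale] rF f)
qed


section \<open>Coordinate projections\<close>

definition Pb :: "('k::field \<Rightarrow> 'u::ab_group_add \<Rightarrow> 'u) \<Rightarrow> 'u set \<Rightarrow> ('k \<Rightarrow> 'w::ab_group_add \<Rightarrow> 'w)
   \<Rightarrow> 'u \<Rightarrow> ('u \<times> 'w \<Rightarrow> 'k) \<Rightarrow> 'w" where
  "Pb sU2 B sW b f = Ext sW (\<lambda>(u, w). sW (module.representation sU2 B u b) w) f"

context
  fixes sU2 :: "'k::field \<Rightarrow> 'u::ab_group_add \<Rightarrow> 'u" and sW :: "'k \<Rightarrow> 'w::ab_group_add \<Rightarrow> 'w"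
    and B :: "'u set"
  assumes vsU: "vector_space sU2" and vsW: "vector_space sW"
    and indep: "\<not> module.dependent sU2 B" and spanB: "module.span sU2 B = UNIV"
begin

interpretation U2: vector_space sU2 by (rule vsU)
interpretation W: vector_space sW by (rule vsW)

lemma inspan: "u \<in> U2.span B" using spanB by simp

lemma crd_add: "U2.representation B (u + v) b = U2.representation B u b + U2.representation B v b"
  using U2.representation_add[OF indep inspan inspan] by simp

lemma crd_scale: "U2.representation B (sU2 c u) b = c * U2.representation B u b"
  using U2.representation_scale[OF indep inspan] by simp

lemma P_delta: "Pb sU2 B sW b (delta (u, w)) = sW (U2.representation B u b) w"
  by (simp add: Pb_def Ext_delta[OF vsW])

lemma P_add: "f \<in> free_space \<Longrightarrow> g \<in> free_space \<Longrightarrow> Pb sU2 B sW b (f + g) = Pb sU2 B sW b f + Pb sU2 B sW b g"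
  by (simp add: Pb_def Ext_add[OF vsW])

lemma P_diff: "f \<in> free_space \<Longrightarrow> g \<in> free_space \<Longrightarrow> Pb sU2 B sW b (f - g) = Pb sU2 B sW b f - Pb sU2 B sW b g"
  by (simp add: Pb_def Ext_diff[OF vsW])

lemma P_scale: "f \<in> free_space \<Longrightarrow> Pb sU2 B sW b (fscale c f) = sW c (Pb sU2 B sW b f)"
  by (simp add: Pb_def Ext_scale[OF vsW])

lemma P_null: assumes "x \<in> tensor_null sU2 sW" shows "Pb sU2 B sW b x = 0"
proof -
  have "bil sU2 sW sW {0} (\<lambda>(u, w). sW (U2.representation B u b) w)"
    unfolding bil_def
    by (simp add: crd_add crd_scale W.scale_left_distrib W.scale_right_distrib W.scale_left_commute)
  from bil_null[OF vsW W.subspace_single_0 this assms] show ?thesis by (simp add: Pb_def)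
qed

lemma P_cong: "f \<in> free_space \<Longrightarrow> g \<in> free_space \<Longrightarrow> f - g \<in> tensor_null sU2 sW \<Longrightarrow>
   Pb sU2 B sW b f = Pb sU2 B sW b g"
  using P_null[of "f - g" b] P_diff[of f g b] by simp

lemma P_zero_null:
  assumes f: "f \<in> free_space" and z: "\<And>b. Pb sU2 B sW b f = 0"
  shows "f \<in> tensor_null sU2 sW"
proof -
  let ?N = "tensor_null sU2 sW"
  let ?Q = "{q. f q \<noteq> 0}"
  let ?r = "\<lambda>u b. U2.representation B u b"
  have finQ: "finite ?Q" using f by (simp add: free_space_def)
  define S where "S = (\<Union>q\<in>?Q. {b. ?r (fst q) b \<noteq> 0})"
  have finS: "finite S" unfolding S_def using finQ U2.finite_representation by blast
  have dec_u: "u = (\<Sum>b\<in>S. sU2 (?r u b) b)" if "{b. ?r u b \<noteq> 0} \<subseteq> S" for u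
  proof -
    have "u = (\<Sum>b | ?r u b \<noteq> 0. sU2 (?r u b) b)"
      using U2.sum_nonzero_representation_eq[OF indep inspan] by simp
    also have "\<dots> = (\<Sum>b\<in>S. sU2 (?r u b) b)"
      by (rule sum.mono_neutral_left[OF finS that]) auto
    finally show ?thesis .
  qed
  have step1: "delta (u, w) - (\<Sum>b\<in>S. delta (b, sW (?r u b) w)) \<in> ?N"
    if "{b. ?r u b \<noteq> 0} \<subseteq> S" for u w
  proof -
    have a: "delta (u, w) - (\<Sum>b\<in>S. delta (sU2 (?r u b) b, w)) \<in> ?N"
      using delta_sum1[of "\<lambda>b. sU2 (?r u b) b" S w sU2 sW] dec_u[OF that] by simp
    have b: "(\<Sum>b\<in>S. delta (sU2 (?r u b) b, w)) - (\<Sum>b\<in>S. delta (b, sW (?r u b) w)) \<in> ?N"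
    proof (rule null_sum_cong)
      fix b
      have "(delta (sU2 (?r u b) b, w) - fscale (?r u b) (delta (b, w)))
            - (delta (b, sW (?r u b) w) - fscale (?r u b) (delta (b, w))) \<in> ?N"
        by (rule null_diff[OF rel3 rel4])
      then show "delta (sU2 (?r u b) b, w) - delta (b, sW (?r u b) w) \<in> ?N" by simp
    qed
    show ?thesis by (rule null_cong[OF a b])
  qed
  define y where "y = (\<lambda>q b. sW (?r (fst q) b) (sW (f q) (snd q)))"
  have step2: "fscale (f q) (delta q) - (\<Sum>b\<in>S. delta (b, y q b)) \<in> ?N" if "q \<in> ?Q" for q
  proof -
    obtain u w where q: "q = (u, w)" by force
    have a: "fscale (f q) (delta q) - delta (u, sW (f q) w) \<in> ?N"
      using null_sym[OF rel4[where u=u and c="f q" and w=w and sU=sU2 and sW=sW]] q by simp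
    have "{b. ?r u b \<noteq> 0} \<subseteq> S" using that q unfolding S_def by force
    from step1[OF this, of "sW (f q) w"] have b: "delta (u, sW (f q) w) - (\<Sum>b\<in>S. delta (b, y q b)) \<in> ?N"
      by (simp add: y_def q)
    show ?thesis by (rule null_cong[OF a b])
  qed
  have fdec: "f = (\<Sum>q\<in>?Q. fscale (f q) (delta q))"
    using free_decomp[OF f] by (simp add: Ext_def)
  have c1: "f - (\<Sum>q\<in>?Q. \<Sum>b\<in>S. delta (b, y q b)) \<in> ?N"
    using null_sum_cong[of ?Q "\<lambda>q. fscale (f q) (delta q)" "\<lambda>q. \<Sum>b\<in>S. delta (b, y q b)" sU2 sW] step2
    fdec by simp
  have swap: "(\<Sum>q\<in>?Q. \<Sum>b\<in>S. delta (b, y q b)) = (\<Sum>b\<in>S. \<Sum>q\<in>?Q. delta (b, y q b))"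
    by (rule sum.swap)
  have ysum: "(\<Sum>q\<in>?Q. y q b) = 0" for b
  proof -
    have "(\<Sum>q\<in>?Q. y q b) = Pb sU2 B sW b f"
      unfolding Pb_def Ext_def y_def
      by (rule sum.cong) (auto simp: W.scale_left_commute split: prod.splits)
    then show ?thesis using z by simp
  qed
  have c2: "(\<Sum>b\<in>S. \<Sum>q\<in>?Q. delta (b, y q b)) - (\<Sum>b\<in>S. delta (b, 0)) \<in> ?N"
  proof (rule null_sum_cong)
    fix b
    show "(\<Sum>q\<in>?Q. delta (b, y q b)) - delta (b, 0) \<in> ?N"
      using null_sym[OF delta_sum2[of b "\<lambda>q. y q b" ?Q sU2 sW]] ysum[of b] by simp
  qed
  have c3: "(\<Sum>b\<in>S. delta (b, 0)) - 0 \<in> ?N"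
    using null_sum[of S "\<lambda>b. delta (b, 0)" sU2 sW] delta_zero2 by auto
  have "f - 0 \<in> ?N"
    by (rule null_cong[OF null_cong[OF c1[unfolded swap] c2] c3])
  then show ?thesis by simp
qed

lemma crd_eq: assumes "\<And>b. U2.representation B x b = U2.representation B y b" shows "x = y"
proof -
  have "x = (\<Sum>b | U2.representation B x b \<noteq> 0. sU2 (U2.representation B x b) b)"
    using U2.sum_nonzero_representation_eq[OF indep inspan] by simp
  also have "\<dots> = (\<Sum>b | U2.representation B y b \<noteq> 0. sU2 (U2.representation B y b) b)"
    using assms by simp
  also have "\<dots> = y"
    using U2.sum_nonzero_representation_eq[OF indep inspan] by simp
  finally show ?thesis .
qed

lemma cancel:
  assumes w0: "w0 \<noteq> 0" and d: "delta (x, w0) - delta (y, w0) \<in> tensor_null sU2 sW"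
  shows "x = y"
proof (rule crd_eq)
  fix b
  have "Pb sU2 B sW b (delta (x, w0)) = Pb sU2 B sW b (delta (y, w0))"
    by (rule P_cong[OF free_delta free_delta d])
  then have "sW (U2.representation B x b) w0 = sW (U2.representation B y b) w0"
    by (simp add: P_delta)
  then show "U2.representation B x b = U2.representation B y b" using w0 by simp
qed

end


lemma rep_space: "X \<in> tensor_space sU sW \<Longrightarrow> tensor_rep X \<in> free_space \<and> X = tensor_cls sU sW (tensor_rep X)"
proof -
  assume "X \<in> tensor_space sU sW"
  then obtain f where f: "f \<in> free_space" "X = tensor_cls sU sW f" using space_cls by blast
  then show ?thesis using rep_cls[OF f(1), where sU=sU and sW=sW] cls_eq by blast
qed

lemma Ext_free: "(\<And>q. G q \<in> free_space) \<Longrightarrow> Ext fscale G f \<in> free_space"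
  unfolding Ext_def by (intro free_sum free_scale) auto

lemma lin_ext_delta: "lin_ext G (delta p) = G p"
  by (simp add: lin_ext_Ext Ext_delta[OF vs_fscale])

lemma Ext_map:
  assumes lin: "Vector_Spaces.linear s s' h"
  shows "Ext s' (\<lambda>q. h (G q)) f = h (Ext s G f)"
proof -
  interpret H: Vector_Spaces.linear s s' h by (rule lin)
  show ?thesis unfolding Ext_def by (simp add: H.sum H.scale)
qed

lemma Ext_nonzero: "Ext s G f \<noteq> 0 \<Longrightarrow> \<exists>q. f q \<noteq> 0 \<and> s (f q) (G q) \<noteq> 0"
proof (rule ccontr)
  assume a: "Ext s G f \<noteq> 0" and b: "\<not> (\<exists>q. f q \<noteq> 0 \<and> s (f q) (G q) \<noteq> 0)"
  then have "\<forall>q\<in>{q. f q \<noteq> 0}. s (f q) (G q) = 0" by blast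
  then have "Ext s G f = 0" unfolding Ext_def by (rule sum.neutral)
  with a show False by simp
qed

context
  fixes sU2 :: "'k::field \<Rightarrow> 'u::ab_group_add \<Rightarrow> 'u" and sW :: "'k \<Rightarrow> 'w::ab_group_add \<Rightarrow> 'w"
    and B :: "'u set"
  assumes vsU: "vector_space sU2" and vsW: "vector_space sW"
    and indep: "\<not> module.dependent sU2 B" and spanB: "module.span sU2 B = UNIV"
begin

interpretation U2: vector_space sU2 by (rule vsU)
interpretation W: vector_space sW by (rule vsW)

lemma P_nonzero: "Pb sU2 B sW b f \<noteq> 0 \<Longrightarrow> \<exists>q. f q \<noteq> 0 \<and> U2.representation B (fst q) b \<noteq> 0"
  unfolding Pb_def by (drule Ext_nonzero) (auto split: prod.splits)

lemma P_act:
  assumes t: "Vector_Spaces.linear sW sW t" and f: "f \<in> free_space"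
  shows "Pb sU2 B sW b (lin_ext (\<lambda>(u, w). delta (0, w) + delta (u, t w)) f) = t (Pb sU2 B sW b f)"
proof -
  interpret T: Vector_Spaces.linear sW sW t by (rule t)
  have r0: "U2.representation B 0 b = 0" by (simp add: U2.representation_zero)
  have "Pb sU2 B sW b (lin_ext (\<lambda>(u, w). delta (0, w) + delta (u, t w)) f)
     = Ext sW (\<lambda>q. Pb sU2 B sW b ((\<lambda>(u, w). delta (0, w) + delta (u, t w)) q)) f"
    unfolding lin_ext_Ext Pb_def by (rule Ext_comp[OF vsW f]) (auto split: prod.splits intro: free_add)
  also have "\<dots> = Ext sW (\<lambda>q. t ((\<lambda>(u, w). sW (U2.representation B u b) w) q)) f"
    by (rule arg_cong[where f="\<lambda>G. Ext sW G f"])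
       (auto simp: fun_eq_iff P_add[OF vsU vsW indep spanB] P_delta[OF vsU vsW indep spanB] r0 T.scale split: prod.splits)
  also have "\<dots> = t (Pb sU2 B sW b f)" unfolding Pb_def by (rule Ext_map[OF t])
  finally show ?thesis .
qed

end


lemma act_bil:
  assumes vU: "vector_space sU" and vW: "vector_space sW"
    and la: "Vector_Spaces.linear sU sU a" and lt: "Vector_Spaces.linear sW sW t"
  shows "bil sU sW fscale (tensor_null sU sW) (\<lambda>(u, w). delta (a u, w) + delta (u, t w))"
proof -
  interpret U: vector_space sU by (rule vU)
  interpret W: vector_space sW by (rule vW)
  have 1: "bil sU sW fscale (tensor_null sU sW) (\<lambda>(u, w). delta (a u, w))"
    using bil_delta[OF la W.linear_id] by simp
  have 2: "bil sU sW fscale (tensor_null sU sW) (\<lambda>(u, w). delta (u, t w))"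
    using bil_delta[OF U.linear_id lt] by simp
  have eq: "(\<lambda>q. (\<lambda>(u, w). delta (a u, w)) q + (\<lambda>(u, w). delta (u, t w)) q)
        = (\<lambda>(u, w). delta (a u, w) + delta (u, t w))" by (auto simp: fun_eq_iff)
  from bil_plus[OF null_subspace 1 2] show ?thesis by (simp only: eq)
qed

lemma map_bil:
  assumes vW: "vector_space sW" and lg: "Vector_Spaces.linear sU sU2 g"
  shows "bil sU sW fscale (tensor_null sU2 sW) (\<lambda>(u, w). delta (g u, w))"
proof -
  interpret W: vector_space sW by (rule vW)
  show ?thesis using bil_delta[OF lg W.linear_id] by simp
qed

lemma act_cls:
  assumes vU: "vector_space sU" and vW: "vector_space sW"
    and la: "Vector_Spaces.linear sU sU (aU h)" and lt: "Vector_Spaces.linear sW sW (aW h)"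
    and f: "f \<in> free_space"
  shows "tensor_act sU sW aU aW h (tensor_cls sU sW f)
       = tensor_cls sU sW (lin_ext (\<lambda>(u, w). delta (aU h u, w) + delta (u, aW h w)) f)"
  unfolding tensor_act_def by (rule ext_cls[OF act_bil[OF vU vW la lt] f])

lemma map_cls:
  assumes vW: "vector_space sW" and lg: "Vector_Spaces.linear sU sU2 g"
    and f: "f \<in> free_space"
  shows "tensor_map_left sU2 sW g (tensor_cls sU sW f)
       = tensor_cls sU2 sW (lin_ext (\<lambda>(u, w). delta (g u, w)) f)"
  unfolding tensor_map_left_def by (rule ext_cls[OF map_bil[OF vW lg] f])


theorem lemma3p1:
  fixes sg :: "'k::field_char_0 \<Rightarrow> 'g::ab_group_add \<Rightarrow> 'g"
    and br :: "'g \<Rightarrow> 'g \<Rightarrow> 'g"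
    and I :: "'g set"
    and sU :: "'k \<Rightarrow> 'u::ab_group_add \<Rightarrow> 'u" and aU :: "'g \<Rightarrow> 'u \<Rightarrow> 'u"
    and sU2 :: "'k \<Rightarrow> 'u2::ab_group_add \<Rightarrow> 'u2" and aU2 :: "'g \<Rightarrow> 'u2 \<Rightarrow> 'u2"
    and sW :: "'k \<Rightarrow> 'w::ab_group_add \<Rightarrow> 'w" and aW :: "'g \<Rightarrow> 'w \<Rightarrow> 'w"
    and \<phi> :: "('u \<times> 'w \<Rightarrow> 'k) set \<Rightarrow> ('u2 \<times> 'w \<Rightarrow> 'k) set"
  assumes "lie_algebra sg br"
    and "lie_ideal sg br I"
    and "lie_module sg br sU aU" and "\<forall>i\<in>I. \<forall>u. aU i u = 0"
    and "lie_module sg br sU2 aU2" and "\<forall>i\<in>I. \<forall>u. aU2 i u = 0"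
    and "lie_module sg br sW aW"
    and "acts_densely I aW"
    and "irreducible_under sW I aW"
    and "endo_scalar sW I aW"
    and "tensor_module_hom sU aU sU2 aU2 sW aW \<phi>"
  shows "\<exists>!g. lie_module_hom sU aU sU2 aU2 g
            \<and> (\<forall>X\<in>tensor_space sU sW. \<phi> X = tensor_map_left sU2 sW g X)"
proof -
  have vsU: "vector_space sU" and linU: "\<And>x. Vector_Spaces.linear sU sU (aU x)"
    using assms(3) by (auto simp: lie_module_def)
  have vsU2: "vector_space sU2" and linU2: "\<And>x. Vector_Spaces.linear sU2 sU2 (aU2 x)"
    using assms(5) by (auto simp: lie_module_def)
  have vsW: "vector_space sW" and linW: "\<And>x. Vector_Spaces.linear sW sW (aW x)"
    using assms(7) by (auto simp: lie_module_def)
  interpret U: vector_space sU by (rule vsU)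
  interpret U2: vector_space sU2 by (rule vsU2)
  interpret W: vector_space sW by (rule vsW)
  obtain w0 :: 'w where w0: "w0 \<noteq> 0" using assms(9) unfolding irreducible_under_def by blast
  obtain B where indep: "\<not> U2.dependent B" and spanB': "UNIV \<subseteq> U2.span B"
    using U2.basis_exists[of UNIV] by blast
  have spanB: "U2.span B = UNIV" using spanB' by auto
  have inspan: "\<And>u. u \<in> U2.span B" using spanB by simp
  note PL = P_delta[OF vsU2 vsW indep spanB] P_add[OF vsU2 vsW indep spanB]
    P_diff[OF vsU2 vsW indep spanB] P_scale[OF vsU2 vsW indep spanB]
    P_cong[OF vsU2 vsW indep spanB]
  have hom_sp: "\<And>X. X \<in> tensor_space sU sW \<Longrightarrow> \<phi> X \<in> tensor_space sU2 sW"
   and hom_add: "\<And>X Y. X \<in> tensor_space sU sW \<Longrightarrow> Y \<in> tensor_space sU sW \<Longrightarrow>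
        \<phi> (tensor_add sU sW X Y) = tensor_add sU2 sW (\<phi> X) (\<phi> Y)"
   and hom_scale: "\<And>c X. X \<in> tensor_space sU sW \<Longrightarrow>
        \<phi> (tensor_scale sU sW c X) = tensor_scale sU2 sW c (\<phi> X)"
   and hom_act: "\<And>h X. X \<in> tensor_space sU sW \<Longrightarrow>
        \<phi> (tensor_act sU sW aU aW h X) = tensor_act sU2 sW aU2 aW h (\<phi> X)"
    using assms(11) unfolding tensor_module_hom_def by blast+
  define Rep where "Rep f = tensor_rep (\<phi> (tensor_cls sU sW f))" for f
  have Rep: "Rep f \<in> free_space \<and> \<phi> (tensor_cls sU sW f) = tensor_cls sU2 sW (Rep f)"
    if "f \<in> free_space" for f
    using rep_space[OF hom_sp[OF cls_space[OF that]]] unfolding Rep_def by blast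
  have Rep_add: "Rep (f + g) - (Rep f + Rep g) \<in> tensor_null sU2 sW"
    if f: "f \<in> free_space" and g: "g \<in> free_space" for f g
  proof -
    have "tensor_cls sU2 sW (Rep (f + g)) = \<phi> (tensor_cls sU sW (f + g))"
      using Rep[OF free_add[OF f g]] by simp
    also have "\<dots> = \<phi> (tensor_add sU sW (tensor_cls sU sW f) (tensor_cls sU sW g))"
      by (simp add: add_cls f g)
    also have "\<dots> = tensor_add sU2 sW (tensor_cls sU2 sW (Rep f)) (tensor_cls sU2 sW (Rep g))"
      using hom_add[OF cls_space[OF f] cls_space[OF g]] Rep[OF f] Rep[OF g] by simp
    also have "\<dots> = tensor_cls sU2 sW (Rep f + Rep g)"
      using Rep[OF f] Rep[OF g] by (simp add: add_cls)
    finally show ?thesis using Rep[OF free_add[OF f g]] by (intro cls_inj) auto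
  qed
  have Rep_scale: "Rep (fscale c f) - fscale c (Rep f) \<in> tensor_null sU2 sW"
    if f: "f \<in> free_space" for f c
  proof -
    have "tensor_cls sU2 sW (Rep (fscale c f)) = \<phi> (tensor_cls sU sW (fscale c f))"
      using Rep[OF free_scale[OF f]] by simp
    also have "\<dots> = \<phi> (tensor_scale sU sW c (tensor_cls sU sW f))"
      by (simp add: scale_cls f)
    also have "\<dots> = tensor_scale sU2 sW c (tensor_cls sU2 sW (Rep f))"
      using hom_scale[OF cls_space[OF f]] Rep[OF f] by simp
    also have "\<dots> = tensor_cls sU2 sW (fscale c (Rep f))"
      using Rep[OF f] by (simp add: scale_cls)
    finally show ?thesis using Rep[OF free_scale[OF f]] by (intro cls_inj) auto
  qed
  have Rep_eq: "Rep f = Rep g" if "f - g \<in> tensor_null sU sW" for f g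
    unfolding Rep_def using cls_eq[OF that] by simp
  define L where "L b f = Pb sU2 B sW b (Rep f)" for b f
  have L_add: "L b (f + g) = L b f + L b g" if f: "f \<in> free_space" and g: "g \<in> free_space" for b f g
    unfolding L_def using PL(5)[OF conjunct1[OF Rep[OF free_add[OF f g]]] _ Rep_add[OF f g], where b=b]
      PL(2)[where f="Rep f" and g="Rep g" and b=b] Rep[OF f] Rep[OF g] free_add by metis
  have L_scale: "L b (fscale c f) = sW c (L b f)" if f: "f \<in> free_space" for b c f
    unfolding L_def using PL(5)[OF conjunct1[OF Rep[OF free_scale[OF f]]] _ Rep_scale[OF f], where b=b]
      PL(4)[where f="Rep f" and b=b and c=c] Rep[OF f] free_scale by metis
  have L_eq: "L b f = L b g" if "f - g \<in> tensor_null sU sW" for b f g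
    unfolding L_def using Rep_eq[OF that] by simp
  have N2_free: "\<And>x. x \<in> tensor_null sU2 sW \<Longrightarrow> x \<in> free_space" by (rule null_free')
  have t_lin: "Vector_Spaces.linear sW sW (\<lambda>w. L b (delta (u, w)))" for u b
  proof (unfold_locales)
    fix w1 w2
    have "delta (u, w1 + w2) - (delta (u, w1) + delta (u, w2)) \<in> tensor_null sU sW"
      using rel2[of u w1 w2 sU sW] by (simp add: algebra_simps)
    then show "L b (delta (u, w1 + w2)) = L b (delta (u, w1)) + L b (delta (u, w2))"
      using L_eq L_add[OF free_delta free_delta] by metis
  next
    fix c w
    have "delta (u, sW c w) - fscale c (delta (u, w)) \<in> tensor_null sU sW"
      by (rule rel4)
    then show "L b (delta (u, sW c w)) = sW c (L b (delta (u, w)))"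
      using L_eq L_scale[OF free_delta] by metis
  qed
  have t_eqv: "L b (delta (u, aW i w)) = aW i (L b (delta (u, w)))" if i: "i \<in> I" for b u w i
  proof -
    let ?A1 = "\<lambda>(u, w). delta (aU i u, w) + delta (u, aW i w)"
    let ?A2 = "\<lambda>(u, w). delta (aU2 i u, w) + delta (u, aW i w)"
    have A2eq: "?A2 = (\<lambda>(u, w). delta (0, w) + delta (u, aW i w))"
      using assms(6) i by (auto simp: fun_eq_iff)
    have au0: "aU i u = 0" using assms(4) i by blast
    have e1: "lin_ext ?A1 (delta (u, w)) = delta (0, w) + delta (u, aW i w)"
      by (simp only: lin_ext_delta prod.case au0)
    have e2: "d - (z + d) = - z" for d z :: "'u \<times> 'w \<Rightarrow> 'k" by simp
    have "delta (u, aW i w) - lin_ext ?A1 (delta (u, w)) \<in> tensor_null sU sW"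
      unfolding e1 e2 by (rule null_neg[OF delta_zero1])
    then have "tensor_cls sU sW (delta (u, aW i w)) = tensor_cls sU sW (lin_ext ?A1 (delta (u, w)))"
      by (rule cls_eq)
    also have "\<dots> = tensor_act sU sW aU aW i (tensor_cls sU sW (delta (u, w)))"
      by (rule act_cls[OF vsU vsW linU linW free_delta, symmetric])
    finally have "\<phi> (tensor_cls sU sW (delta (u, aW i w))) =
        tensor_act sU2 sW aU2 aW i (tensor_cls sU2 sW (Rep (delta (u, w))))"
      using hom_act[OF cls_space[OF free_delta]] Rep[OF free_delta] by simp
    also have "\<dots> = tensor_cls sU2 sW (lin_ext ?A2 (Rep (delta (u, w))))"
      by (rule act_cls[OF vsU2 vsW linU2 linW conjunct1[OF Rep[OF free_delta]]])
    finally have "Rep (delta (u, aW i w)) - lin_ext ?A2 (Rep (delta (u, w))) \<in> tensor_null sU2 sW"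
      using Rep[OF free_delta] by (intro cls_inj) auto
    note dN = this
    have gF: "lin_ext ?A2 (Rep (delta (u, w))) \<in> free_space"
      by (auto simp: lin_ext_Ext intro!: Ext_free free_add)
    have "L b (delta (u, aW i w)) = Pb sU2 B sW b (lin_ext ?A2 (Rep (delta (u, w))))"
      unfolding L_def by (rule PL(5)[OF conjunct1[OF Rep[OF free_delta]] gF dN])
    also have "\<dots> = aW i (L b (delta (u, w)))"
      unfolding A2eq L_def
      by (rule P_act[OF vsU2 vsW indep spanB linW conjunct1[OF Rep[OF free_delta]]])
    finally show ?thesis .
  qed
  have cex: "\<exists>k. \<forall>w. L b (delta (u, w)) = sW k w" for u b
    using assms(10) t_lin[of b u] t_eqv[of _ b u] unfolding endo_scalar_def by blast
  define c where "c u b = (SOME k. \<forall>w. L b (delta (u, w)) = sW k w)" for u b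
  have cprop: "L b (delta (u, w)) = sW (c u b) w" for u b w
    using someI_ex[OF cex[of b u]] unfolding c_def by blast
  have csub: "{b. c u b \<noteq> 0} \<subseteq> (\<Union>q\<in>{q. Rep (delta (u, w0)) q \<noteq> 0}. {b. U2.representation B (fst q) b \<noteq> 0})" for u
  proof
    fix b assume "b \<in> {b. c u b \<noteq> 0}"
    then have "L b (delta (u, w0)) \<noteq> 0" using cprop w0 by simp
    then show "b \<in> (\<Union>q\<in>{q. Rep (delta (u, w0)) q \<noteq> 0}. {b. U2.representation B (fst q) b \<noteq> 0})"
      unfolding L_def using P_nonzero[OF vsU2 vsW indep spanB] by blast
  qed
  have cfin: "finite {b. c u b \<noteq> 0}" for u
    by (rule finite_subset[OF csub]) (use Rep[OF free_delta] U2.finite_representation in \<open>auto simp: free_space_def\<close>)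
  have cB: "c u b \<noteq> 0 \<Longrightarrow> b \<in> B" for u b
    using csub[of u] U2.representation_ne_zero by blast
  define g where "g u = (\<Sum>b | c u b \<noteq> 0. sU2 (c u b) b)" for u
  have gdef: "(\<Sum>b | c u b \<noteq> 0. sU2 (c u b) b) = g u" for u using g_def by metis
  have crd_g: "U2.representation B (g u) = c u" for u
    by (rule U2.representation_eqI[OF indep inspan cB cfin gdef])
  have main: "Rep (delta (u, w)) - delta (g u, w) \<in> tensor_null sU2 sW" for u w
  proof (rule P_zero_null[OF vsU2 vsW indep spanB])
    show "Rep (delta (u, w)) - delta (g u, w) \<in> free_space"
      using Rep[OF free_delta] by (auto intro: free_diff)
    fix b
    show "Pb sU2 B sW b (Rep (delta (u, w)) - delta (g u, w)) = 0"
      using cprop[of b u w] Rep[OF free_delta]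
      by (simp add: PL(3) PL(1) crd_g L_def)
  qed
  have phid: "\<phi> (tensor_cls sU sW (delta (u, w))) = tensor_cls sU2 sW (delta (g u, w))" for u w
    using Rep[OF free_delta] cls_eq[OF main] by simp
  have canc: "x = y" if "tensor_cls sU2 sW (delta (x, w0)) = tensor_cls sU2 sW (delta (y, w0))" for x y
    by (rule cancel[OF vsU2 vsW indep spanB w0 cls_inj[OF free_delta that]])
  have c1_add: "\<phi> (tensor_cls sU sW (f + g)) = tensor_add sU2 sW (\<phi> (tensor_cls sU sW f)) (\<phi> (tensor_cls sU sW g))"
    if "f \<in> free_space" "g \<in> free_space" for f g
    using hom_add[OF cls_space cls_space, OF that] add_cls[OF that] by simp
  have g_add: "g (u1 + u2) = g u1 + g u2" for u1 u2
  proof (rule canc)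
    have r1: "delta (u1 + u2, w0) - (delta (u1, w0) + delta (u2, w0)) \<in> tensor_null sU sW"
      using rel1[of u1 u2 w0 sU sW] by (simp add: algebra_simps)
    have r2: "delta (g u1 + g u2, w0) - (delta (g u1, w0) + delta (g u2, w0)) \<in> tensor_null sU2 sW"
      using rel1[of "g u1" "g u2" w0 sU2 sW] by (simp add: algebra_simps)
    have "tensor_cls sU2 sW (delta (g (u1 + u2), w0)) = \<phi> (tensor_cls sU sW (delta (u1, w0) + delta (u2, w0)))"
      using phid cls_eq[OF r1] by metis
    also have "\<dots> = tensor_cls sU2 sW (delta (g u1, w0) + delta (g u2, w0))"
      by (simp add: c1_add phid add_cls)
    also have "\<dots> = tensor_cls sU2 sW (delta (g u1 + g u2, w0))"
      using cls_eq[OF r2] by simp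
    finally show "tensor_cls sU2 sW (delta (g (u1 + u2), w0)) = tensor_cls sU2 sW (delta (g u1 + g u2, w0))" .
  qed
  have g_scale: "g (sU k u) = sU2 k (g u)" for k u
  proof (rule canc)
    have r1: "delta (sU k u, w0) - fscale k (delta (u, w0)) \<in> tensor_null sU sW" by (rule rel3)
    have r2: "delta (sU2 k (g u), w0) - fscale k (delta (g u, w0)) \<in> tensor_null sU2 sW" by (rule rel3)
    have "tensor_cls sU2 sW (delta (g (sU k u), w0)) = \<phi> (tensor_cls sU sW (fscale k (delta (u, w0))))"
      using phid cls_eq[OF r1] by metis
    also have "\<dots> = \<phi> (tensor_scale sU sW k (tensor_cls sU sW (delta (u, w0))))"
      by (simp add: scale_cls)
    also have "\<dots> = tensor_scale sU2 sW k (\<phi> (tensor_cls sU sW (delta (u, w0))))"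
      by (rule hom_scale[OF cls_space[OF free_delta]])
    also have "\<dots> = tensor_scale sU2 sW k (tensor_cls sU2 sW (delta (g u, w0)))"
      by (simp only: phid)
    also have "\<dots> = tensor_cls sU2 sW (fscale k (delta (g u, w0)))"
      by (rule scale_cls[OF free_delta])
    also have "\<dots> = tensor_cls sU2 sW (delta (sU2 k (g u), w0))"
      using cls_eq[OF r2] by simp
    finally show "tensor_cls sU2 sW (delta (g (sU k u), w0)) = tensor_cls sU2 sW (delta (sU2 k (g u), w0))" .
  qed
  have g_lin: "Vector_Spaces.linear sU sU2 g"
    by unfold_locales (simp_all add: g_add g_scale)
  have g_eqv: "g (aU h u) = aU2 h (g u)" for h u
  proof (rule canc)
    have e1: "lin_ext (\<lambda>(u, w). delta (aU h u, w) + delta (u, aW h w)) (delta (u, w0))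
        = delta (aU h u, w0) + delta (u, aW h w0)"
      by (simp only: lin_ext_delta prod.case)
    have e2: "lin_ext (\<lambda>(u, w). delta (aU2 h u, w) + delta (u, aW h w)) (delta (g u, w0))
        = delta (aU2 h (g u), w0) + delta (g u, aW h w0)"
      by (simp only: lin_ext_delta prod.case)
    have "\<phi> (tensor_act sU sW aU aW h (tensor_cls sU sW (delta (u, w0))))
        = tensor_cls sU2 sW (delta (g (aU h u), w0) + delta (g u, aW h w0))"
      by (simp add: act_cls[OF vsU vsW linU linW free_delta] e1 c1_add phid add_cls)
    moreover have "\<phi> (tensor_act sU sW aU aW h (tensor_cls sU sW (delta (u, w0))))
        = tensor_cls sU2 sW (delta (aU2 h (g u), w0) + delta (g u, aW h w0))"
      by (simp add: hom_act[OF cls_space[OF free_delta]] phid act_cls[OF vsU2 vsW linU2 linW free_delta] e2)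
    ultimately have "(delta (g (aU h u), w0) + delta (g u, aW h w0)) - (delta (aU2 h (g u), w0) + delta (g u, aW h w0))
       \<in> tensor_null sU2 sW"
      by (intro cls_inj) (auto intro: free_add)
    then have "delta (g (aU h u), w0) - delta (aU2 h (g u), w0) \<in> tensor_null sU2 sW"
      by (simp only: add_diff_cancel_right)
    then show "tensor_cls sU2 sW (delta (g (aU h u), w0)) = tensor_cls sU2 sW (delta (aU2 h (g u), w0))"
      by (rule cls_eq)
  qed
  have ghom: "lie_module_hom sU aU sU2 aU2 g"
    unfolding lie_module_hom_def using g_lin g_eqv by simp
  have L_lin: "L b (\<Sum>q\<in>S. fscale (k q) (delta q)) = (\<Sum>q\<in>S. sW (k q) (L b (delta q)))"
    if "finite S" for S k b
    using that
  proof (induction S rule: finite_induct)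
    case empty
    have z: "fscale 0 (0::'u \<times> 'w \<Rightarrow> 'k) = 0" by (simp add: fun_eq_iff fscale_apply)
    have "L b (fscale 0 0) = sW 0 (L b 0)" by (rule L_scale) simp
    then have "L b 0 = 0" unfolding z W.scale_zero_left .
    then show ?case by (simp only: sum.empty)
  next
    case (insert x F)
    have "L b (\<Sum>q\<in>insert x F. fscale (k q) (delta q)) = L b (fscale (k x) (delta x) + (\<Sum>q\<in>F. fscale (k q) (delta q)))"
      by (rule arg_cong[where f="L b"], rule sum.insert[OF insert(1,2)])
    also have "\<dots> = sW (k x) (L b (delta x)) + L b (\<Sum>q\<in>F. fscale (k q) (delta q))"
      by (simp add: L_add L_scale free_scale free_sum)
    also have "\<dots> = sW (k x) (L b (delta x)) + (\<Sum>q\<in>F. sW (k q) (L b (delta q)))"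
      by (simp only: insert(3))
    also have "\<dots> = (\<Sum>q\<in>insert x F. sW (k q) (L b (delta q)))"
      by (rule sum.insert[OF insert(1,2), symmetric])
    finally show ?case .
  qed
  have L_ext: "L b f = Ext sW (\<lambda>q. L b (delta q)) f" if f: "f \<in> free_space" for b f
  proof -
    have "f = (\<Sum>q\<in>{q. f q \<noteq> 0}. fscale (f q) (delta q))"
      using free_decomp[OF f] by (simp add: Ext_def)
    then have "L b f = L b (\<Sum>q\<in>{q. f q \<noteq> 0}. fscale (f q) (delta q))" by simp
    also have "\<dots> = Ext sW (\<lambda>q. L b (delta q)) f"
      using f by (simp add: L_lin free_space_def Ext_def)
    finally show ?thesis .
  qed
  let ?D = "\<lambda>g. (\<lambda>(u, w). delta (g u, w)) :: 'u \<times> 'w \<Rightarrow> 'u2 \<times> 'w \<Rightarrow> 'k"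
  have Dfree: "lin_ext (?D g) f \<in> free_space" for f
    unfolding lin_ext_Ext by (rule Ext_free) (auto split: prod.splits)
  have final: "\<phi> X = tensor_map_left sU2 sW g X" if X: "X \<in> tensor_space sU sW" for X
  proof -
    obtain f where f: "f \<in> free_space" "X = tensor_cls sU sW f" using space_cls[OF X] by blast
    have "Rep f - lin_ext (?D g) f \<in> tensor_null sU2 sW"
    proof (rule P_zero_null[OF vsU2 vsW indep spanB])
      show "Rep f - lin_ext (?D g) f \<in> free_space" using Rep[OF f(1)] Dfree by (auto intro: free_diff)
      fix b
      have "Pb sU2 B sW b (lin_ext (?D g) f) = Ext sW (\<lambda>q. Pb sU2 B sW b (?D g q)) f"
        unfolding lin_ext_Ext Pb_def by (rule Ext_comp[OF vsW f(1)]) (auto split: prod.splits)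
      also have "\<dots> = Ext sW (\<lambda>q. L b (delta q)) f"
        by (rule arg_cong[where f="\<lambda>G. Ext sW G f"]) (auto simp: fun_eq_iff PL(1) crd_g cprop)
      also have "\<dots> = Pb sU2 B sW b (Rep f)" using L_ext[OF f(1)] by (simp add: L_def)
      finally show "Pb sU2 B sW b (Rep f - lin_ext (?D g) f) = 0"
        using Rep[OF f(1)] Dfree by (simp add: PL(3))
    qed
    then have "\<phi> X = tensor_cls sU2 sW (lin_ext (?D g) f)"
      using Rep[OF f(1)] f(2) cls_eq by metis
    also have "\<dots> = tensor_map_left sU2 sW g X"
      using map_cls[OF vsW g_lin f(1)] f(2) by simp
    finally show ?thesis .
  qed
  show ?thesis
  proof (rule ex1I[of _ g])
    show "lie_module_hom sU aU sU2 aU2 g \<and> (\<forall>X\<in>tensor_space sU sW. \<phi> X = tensor_map_left sU2 sW g X)"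
      using ghom final by blast
  next
    fix g' assume g': "lie_module_hom sU aU sU2 aU2 g' \<and> (\<forall>X\<in>tensor_space sU sW. \<phi> X = tensor_map_left sU2 sW g' X)"
    have lg': "Vector_Spaces.linear sU sU2 g'" using g' by (simp add: lie_module_hom_def)
    show "g' = g"
    proof
      fix u
      have "tensor_cls sU2 sW (delta (g u, w0)) = \<phi> (tensor_cls sU sW (delta (u, w0)))" by (simp add: phid)
      also have "\<dots> = tensor_map_left sU2 sW g' (tensor_cls sU sW (delta (u, w0)))"
        using g' cls_space[OF free_delta] by blast
      also have "\<dots> = tensor_cls sU2 sW (delta (g' u, w0))"
        by (simp add: map_cls[OF vsW lg' free_delta] lin_ext_delta)
      finally show "g' u = g u" by (rule canc[symmetric])
    qed
  qed
qed

end
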